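(* Let $L=\mathbb Z\alpha_1\oplus\mathbb Z\alpha_2\oplus\mathbb Z\alpha_3$ with $\langle\alpha_i,\alpha_j\rangle=2\delta_{ij}$, let $N=\sum_{i,j=1}^3\mathbb Z(\alpha_i\pm\alpha_j)$ (a sublattice isometric to $\sqrt2A_3$), and let $V_N\subset V_L$ be the corresponding lattice vertex operator (sub)algebras. Let $\tau=\sigma\otimes\sigma\otimes\sigma$ be the automorphism of $V_L=V_{\mathbb Z\alpha_1}\otimes V_{\mathbb Z\alpha_2}\otimes V_{\mathbb Z\alpha_3}$ described in the context, and let $V_L^+$ be the fixed point subalgebra of the automorphism $\psi_2$ of $V_L$ induced by the isometry $\beta\mapsto-\beta$ of $L$. Then $\tau(V_N)=V_L^+$.
   Context: For a positive definite even lattice $L$ in which all inner products are even, $V_L=M(1)\otimes\mathbb C[L]$ is the lattice vertex operator algebra (with trivial cocycle), where $\mathfrak h=\mathbb C\otimes_{\mathbb Z}L$, $M(1)=\mathbb C[h(n)\mid h\in\mathfrak h, n<0]$ is the Heisenberg Fock space, and $e^\beta$ ($\beta\in L$) denotes the basis element of the group algebra. Vertex operators: $Y(h(-1),z)=\sum_n h(n)z^{-n-1}$ with $h(0)e^\gamma=\langle h,\gamma\rangle e^\gamma$, and $Y(e^\beta,z)=\exp(\sum_{n<0}\frac{\beta(n)}{-n}z^{-n})\exp(\sum_{n>0}\frac{\beta(n)}{-n}z^{-n})e_\beta z^{\beta}$, where $e_\beta(u\otimes e^\gamma)=u\otimes e^{\beta+\gamma}$ and $z^\beta(u\otimes e^\gamma)=z^{\langle\beta,\gamma\rangle}u\otimes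 e^\gamma$. For a sublattice $N\subset L$, $V_N=M(1)_N\otimes\mathbb C[N]$ is naturally a vertex subalgebra of $V_L$ (with different Virasoro element in general). For $\langle\alpha,\alpha\rangle=2$, the weight-one space of $V_{\mathbb Z\alpha}$ is a Lie algebra $\cong sl_2(\mathbb C)$ with bracket $[u,v]=u_0v$ and basis $\alpha(-1),e^{\alpha},e^{-\alpha}$, and $V_{\mathbb Z\alpha}$ is generated by it. $\sigma$ denotes the (unique) vertex operator algebra automorphism of $V_{\mathbb Z\alpha}$ whose restriction to the weight-one space is $\alpha(-1)\mapsto e^\alpha+e^{-\alpha}$, $e^\alpha+e^{-\alpha}\mapsto\alpha(-1)$, $e^\alpha-e^{-\alpha}\mapsto-(e^\alpha-e^{-\alpha})$. The automorphism $\psi_2$ acts by $u\otimes e^\beta\mapsto \theta(u)\otimes e^{-\beta}$, where $\theta$ is the automorphism of $M(1)$ induced by $h(n)\mapsto -h(n)$; $V_L^{\pm}$ denote its $\pm1$ eigenspaces. *)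

theory Defs
  imports Complex_Main "HOL-Library.Poly_Mapping"
begin

text \<open>Concrete model of the lattice VOA V_L for L = Z a1 + Z a2 + Z a3, <ai,aj> = 2 delta_ij,
  with trivial cocycle.  Basis of V_L = M(1) tensor C[L]: pairs (mon, gamma) where mon is a
  monomial in the Heisenberg variables a_i(-(r+1)) (the key (i,r) stands for a_i(-(r+1)))
  and gamma in L is written in coordinates w.r.t. a1,a2,a3.\<close>

datatype ix = I1 | I2 | I3

type_synonym mon = "(ix \<times> nat) \<Rightarrow>\<^sub>0 nat"
type_synonym lat = "ix \<Rightarrow> int"
type_synonym vec = "mon \<times> lat \<Rightarrow> complex"

definition ip :: "lat \<Rightarrow> lat \<Rightarrow> int" where
  "ip \<beta> \<gamma> = 2 * (\<beta> I1 * \<gamma> I1 + \<beta> I2 * \<gamma> I2 + \<beta> I3 * \<gamma> I3)"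

definition latadd :: "lat \<Rightarrow> lat \<Rightarrow> lat" where
  "latadd \<beta> \<gamma> = (\<lambda>i. \<beta> i + \<gamma> i)"

definition unitv :: "ix \<Rightarrow> lat" where
  "unitv i = (\<lambda>j. if j = i then 1 else 0)"

definition supp :: "vec \<Rightarrow> (mon \<times> lat) set" where
  "supp v = {b. v b \<noteq> 0}"

definition VL :: "vec set" where
  "VL = {v. finite (supp v)}"

definition basis :: "mon \<times> lat \<Rightarrow> vec" where
  "basis b = (\<lambda>x. if x = b then 1 else 0)"

definition vscale :: "complex \<Rightarrow> vec \<Rightarrow> vec" where
  "vscale c v = (\<lambda>x. c * v x)"

definition vadd :: "vec \<Rightarrow> vec \<Rightarrow> vec" where
  "vadd u v = (\<lambda>x. u x + v x)"

definition ext :: "(mon \<times> lat \<Rightarrow> vec) \<Rightarrow> vec \<Rightarrow> vec" where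
  "ext f v = (\<lambda>x. \<Sum>b\<in>supp v. v b * f b x)"

definition vacuum :: vec where
  "vacuum = basis (0, (\<lambda>_. 0))"

definition heis_b :: "ix \<Rightarrow> int \<Rightarrow> mon \<times> lat \<Rightarrow> vec" where
  "heis_b i n b = (case b of (m, \<gamma>) \<Rightarrow>
     if n < 0 then basis (m + Poly_Mapping.single (i, nat (- n - 1)) 1, \<gamma>)
     else if n = 0 then vscale (of_int (2 * \<gamma> i)) (basis (m, \<gamma>))
     else vscale (of_int (2 * n) * of_nat (Poly_Mapping.lookup m (i, nat (n - 1))))
                 (basis (m - Poly_Mapping.single (i, nat (n - 1)) 1, \<gamma>)))"

definition heis :: "ix \<Rightarrow> int \<Rightarrow> vec \<Rightarrow> vec" where
  "heis i n = ext (heis_b i n)"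

definition heisL :: "lat \<Rightarrow> int \<Rightarrow> vec \<Rightarrow> vec" where
  "heisL \<beta> n v = (\<lambda>x. of_int (\<beta> I1) * heis I1 n v x + of_int (\<beta> I2) * heis I2 n v x
                      + of_int (\<beta> I3) * heis I3 n v x)"

text \<open>Coefficients of z^k in exp(sum_{n>0} beta(-n) z^n / n) and of z^(-k) in
  exp(sum_{n>0} beta(n) z^(-n) / (-n)), via k S_k = sum_{n=1}^k x_n S_(k-n).\<close>
fun Sminus :: "lat \<Rightarrow> nat \<Rightarrow> vec \<Rightarrow> vec" where
  "Sminus \<beta> k v = (if k = 0 then v else
     (\<lambda>x. (1 / of_nat k) * (\<Sum>n\<in>{1..k}. heisL \<beta> (- int n) (Sminus \<beta> (k - n) v) x)))"

fun Tplus :: "lat \<Rightarrow> nat \<Rightarrow> vec \<Rightarrow> vec" where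
  "Tplus \<beta> k v = (if k = 0 then v else
     (\<lambda>x. (1 / of_nat k) * (\<Sum>n\<in>{1..k}. - heisL \<beta> (int n) (Tplus \<beta> (k - n) v) x)))"

text \<open>Weight of a monomial (Tplus beta k kills it for k > weight).\<close>
definition wt :: "mon \<Rightarrow> nat" where
  "wt m = (\<Sum>p\<in>Poly_Mapping.keys m. (snd p + 1) * Poly_Mapping.lookup m p)"

definition deg :: "mon \<Rightarrow> nat" where
  "deg m = (\<Sum>p\<in>Poly_Mapping.keys m. Poly_Mapping.lookup m p)"

text \<open>Modes (e^beta)_n: coefficient of z^(-n-1) in
  Y(e^beta,z) = E^-(-beta,z) E^+(-beta,z) e_beta z^beta.\<close>
definition vop_b :: "lat \<Rightarrow> int \<Rightarrow> mon \<times> lat \<Rightarrow> vec" where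
  "vop_b \<beta> n b = (case b of (m, \<gamma>) \<Rightarrow>
     (\<lambda>x. \<Sum>k\<in>{0..wt m}.
        (let j = int k - n - 1 - ip \<beta> \<gamma> in
         if 0 \<le> j then Sminus \<beta> (nat j) (Tplus \<beta> k (basis (m, latadd \<beta> \<gamma>))) x else 0)))"

definition vop :: "lat \<Rightarrow> int \<Rightarrow> vec \<Rightarrow> vec" where
  "vop \<beta> n = ext (vop_b \<beta> n)"

text \<open>The automorphism psi_2: u tensor e^beta |-> theta(u) tensor e^(-beta).\<close>
definition psi2 :: "vec \<Rightarrow> vec" where
  "psi2 = ext (\<lambda>(m, \<gamma>). vscale ((-1) ^ deg m) (basis (m, (\<lambda>i. - \<gamma> i))))"

definition VLplus :: "vec set" where
  "VLplus = {v \<in> VL. psi2 v = v}"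

inductive_set Nlat :: "lat set" where
  zero: "(\<lambda>_. 0) \<in> Nlat"
| addp: "\<gamma> \<in> Nlat \<Longrightarrow> latadd \<gamma> (latadd (unitv i) (unitv j)) \<in> Nlat"
| subp: "\<gamma> \<in> Nlat \<Longrightarrow> latadd \<gamma> (\<lambda>k. - (unitv i k + unitv j k)) \<in> Nlat"
| addm: "\<gamma> \<in> Nlat \<Longrightarrow> latadd \<gamma> (\<lambda>k. unitv i k - unitv j k) \<in> Nlat"
| subm: "\<gamma> \<in> Nlat \<Longrightarrow> latadd \<gamma> (\<lambda>k. - (unitv i k - unitv j k)) \<in> Nlat"

text \<open>V_N = M(1)_N tensor C[N]; since C tensor N = h, M(1)_N = M(1).\<close>
definition VN :: "vec set" where
  "VN = {v \<in> VL. \<forall>m \<gamma>. v (m, \<gamma>) \<noteq> 0 \<longrightarrow> \<gamma> \<in> Nlat}"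

text \<open>tau = sigma tensor sigma tensor sigma: the (unique) VOA automorphism of V_L fixing the
  vacuum and acting on the generating weight-one vectors of each factor V_{Z a_i} by sigma:
  a(-1) |-> e^a + e^-a, e^a |-> (a(-1) - e^a + e^-a)/2, e^-a |-> (a(-1) + e^a - e^-a)/2.
  Being an automorphism is expressed by Y(g u,z) g = g Y(u,z) for these generators.\<close>
definition is_tau :: "(vec \<Rightarrow> vec) \<Rightarrow> bool" where
  "is_tau t \<longleftrightarrow> bij_betw t VL VL
     \<and> (\<forall>u\<in>VL. \<forall>v\<in>VL. t (vadd u v) = vadd (t u) (t v))
     \<and> (\<forall>c. \<forall>v\<in>VL. t (vscale c v) = vscale c (t v))
     \<and> t vacuum = vacuum
     \<and> (\<forall>i n. \<forall>v\<in>VL.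
          t (heis i n v) = vadd (vop (unitv i) n (t v)) (vop (\<lambda>k. - unitv i k) n (t v))
        \<and> t (vop (unitv i) n v) = vscale (1/2) (vadd (heis i n (t v))
              (vadd (vscale (-1) (vop (unitv i) n (t v))) (vop (\<lambda>k. - unitv i k) n (t v))))
        \<and> t (vop (\<lambda>k. - unitv i k) n v) = vscale (1/2) (vadd (heis i n (t v))
              (vadd (vop (unitv i) n (t v)) (vscale (-1) (vop (\<lambda>k. - unitv i k) n (t v))))))"

end

theory Submission
  imports Defs "HOL-Library.Function_Algebras"
begin

lemma sum_fun_apply: "(sum h S) x = (\<Sum>s\<in>S. h s x)"
  by (induct S rule: infinite_finite_induct) auto

lemma vadd_plus: "vadd u v = u + v"
  by (simp add: vadd_def fun_eq_iff)

lemma supp_finite_VL: "v \<in> VL \<Longrightarrow> finite (supp v)"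
  by (simp add: VL_def)

lemma ext_superset:
  assumes "finite S" "supp v \<subseteq> S"
  shows "ext f v x = (\<Sum>b\<in>S. v b * f b x)"
  unfolding ext_def
  by (rule sum.mono_neutral_left) (use assms in \<open>auto simp: supp_def\<close>)

lemma VL_add: "u \<in> VL \<Longrightarrow> v \<in> VL \<Longrightarrow> u + v \<in> VL"
proof -
  assume a: "u \<in> VL" "v \<in> VL"
  have "supp (u + v) \<subseteq> supp u \<union> supp v" by (auto simp: supp_def)
  thus ?thesis using a by (auto simp: VL_def intro: finite_subset)
qed

lemma VL_vadd: "u \<in> VL \<Longrightarrow> v \<in> VL \<Longrightarrow> vadd u v \<in> VL"
  by (simp add: vadd_plus VL_add)

lemma VL_vscale: "v \<in> VL \<Longrightarrow> vscale c v \<in> VL"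
proof -
  assume a: "v \<in> VL"
  have "supp (vscale c v) \<subseteq> supp v" by (auto simp: supp_def vscale_def)
  thus ?thesis using a by (auto simp: VL_def intro: finite_subset)
qed

lemma VL_zero: "0 \<in> VL"
  by (simp add: VL_def supp_def)

lemma VL_sum: "(\<And>s. s \<in> S \<Longrightarrow> h s \<in> VL) \<Longrightarrow> sum h S \<in> VL"
  by (induct S rule: infinite_finite_induct) (auto simp: VL_zero VL_add)

lemma supp_basis: "supp (basis b) = {b}"
  by (auto simp: supp_def basis_def)

lemma VL_basis: "basis b \<in> VL"
  by (simp add: VL_def supp_basis)

lemma ext_VL:
  assumes "v \<in> VL" "\<And>b. f b \<in> VL"
  shows "ext f v \<in> VL"
proof -
  have "supp (ext f v) \<subseteq> (\<Union>b\<in>supp v. supp (f b))"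
  proof
    fix x assume x: "x \<in> supp (ext f v)"
    show "x \<in> (\<Union>b\<in>supp v. supp (f b))"
    proof (rule ccontr)
      assume "x \<notin> (\<Union>b\<in>supp v. supp (f b))"
      hence "\<forall>b\<in>supp v. f b x = 0" by (auto simp: supp_def)
      hence "ext f v x = 0" by (simp add: ext_def)
      thus False using x by (simp add: supp_def)
    qed
  qed
  moreover have "finite (\<Union>b\<in>supp v. supp (f b))" using assms by (auto simp: VL_def)
  ultimately show ?thesis by (auto simp: VL_def intro: finite_subset)
qed

lemma ext_vadd:
  assumes "u \<in> VL" "v \<in> VL"
  shows "ext f (vadd u v) = vadd (ext f u) (ext f v)"
proof -
  let ?S = "supp u \<union> supp v"
  have f: "finite ?S" using assms by (auto simp: VL_def)
  have "supp (vadd u v) \<subseteq> ?S" by (auto simp: supp_def vadd_def)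
  then show ?thesis using f
    by (simp add: fun_eq_iff vadd_def ext_superset[of ?S] distrib_right sum.distrib)
qed

lemma ext_vscale:
  assumes "v \<in> VL"
  shows "ext f (vscale c v) = vscale c (ext f v)"
proof -
  have f: "finite (supp v)" using assms by (auto simp: VL_def)
  have "supp (vscale c v) \<subseteq> supp v" by (auto simp: supp_def vscale_def)
  then show ?thesis using f
    by (simp add: fun_eq_iff vscale_def ext_superset[of "supp v"] sum_distrib_left mult.assoc)
qed

lemma ext_basis: "ext f (basis b) = f b"
  unfolding ext_def supp_basis by (simp add: basis_def)

lemma ext_vscale_basis: "ext f (vscale c (basis b)) = vscale c (f b)"
  by (simp add: ext_vscale VL_basis ext_basis)

lemma ext_comp:
  assumes v: "v \<in> VL" and g: "\<And>b. g b \<in> VL"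
  shows "ext f (ext g v) = ext (\<lambda>b. ext f (g b)) v"
proof
  fix x
  let ?S = "supp v"
  let ?T = "\<Union>b\<in>?S. supp (g b)"
  have fS: "finite ?S" using v by (simp add: VL_def)
  have fT: "finite ?T" using fS g by (auto simp: VL_def)
  have sub: "supp (ext g v) \<subseteq> ?T"
  proof
    fix x assume x: "x \<in> supp (ext g v)"
    show "x \<in> ?T"
    proof (rule ccontr)
      assume "x \<notin> ?T"
      hence "\<forall>b\<in>supp v. g b x = 0" by (auto simp: supp_def)
      hence "ext g v x = 0" by (simp add: ext_def)
      thus False using x by (simp add: supp_def)
    qed
  qed
  have "ext f (ext g v) x = (\<Sum>c\<in>?T. ext g v c * f c x)"
    by (rule ext_superset[OF fT sub])
  also have "\<dots> = (\<Sum>c\<in>?T. \<Sum>b\<in>?S. v b * g b c * f c x)"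
    by (simp add: ext_def sum_distrib_right)
  also have "\<dots> = (\<Sum>b\<in>?S. \<Sum>c\<in>?T. v b * g b c * f c x)"
    by (rule sum.swap)
  also have "\<dots> = (\<Sum>b\<in>?S. v b * ext f (g b) x)"
  proof (rule sum.cong[OF refl])
    fix b assume "b \<in> ?S"
    hence "supp (g b) \<subseteq> ?T" by auto
    hence "ext f (g b) x = (\<Sum>c\<in>?T. g b c * f c x)" by (rule ext_superset[OF fT])
    thus "(\<Sum>c\<in>?T. v b * g b c * f c x) = v b * ext f (g b) x"
      by (simp add: sum_distrib_left mult.assoc)
  qed
  also have "\<dots> = ext (\<lambda>b. ext f (g b)) v x" by (simp add: ext_def)
  finally show "ext f (ext g v) x = ext (\<lambda>b. ext f (g b)) v x" .
qed

definition linV :: "(vec \<Rightarrow> vec) \<Rightarrow> bool" where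
  "linV F \<longleftrightarrow> (\<forall>v\<in>VL. F v \<in> VL) \<and> (\<forall>u\<in>VL. \<forall>v\<in>VL. F (vadd u v) = vadd (F u) (F v))
     \<and> (\<forall>c. \<forall>v\<in>VL. F (vscale c v) = vscale c (F v))"

lemma linV_ext: "(\<And>b. f b \<in> VL) \<Longrightarrow> linV (ext f)"
  by (simp add: linV_def ext_VL ext_vadd ext_vscale)

lemma linV_vscale: "linV (vscale c)"
  unfolding linV_def
  by (intro conjI ballI allI VL_vscale) (auto simp: vscale_def vadd_def fun_eq_iff algebra_simps)

lemma linV_comp: "linV F \<Longrightarrow> linV G \<Longrightarrow> linV (\<lambda>v. F (G v))"
  by (simp add: linV_def VL_vadd VL_vscale)

lemma linV_VL: "linV F \<Longrightarrow> v \<in> VL \<Longrightarrow> F v \<in> VL"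
  by (simp add: linV_def)

lemma linV_add: "linV F \<Longrightarrow> u \<in> VL \<Longrightarrow> v \<in> VL \<Longrightarrow> F (u + v) = F u + F v"
  by (simp add: linV_def vadd_plus[symmetric])

lemma linV_vadd: "linV F \<Longrightarrow> u \<in> VL \<Longrightarrow> v \<in> VL \<Longrightarrow> F (vadd u v) = vadd (F u) (F v)"
  by (simp add: linV_def)

lemma linV_scale: "linV F \<Longrightarrow> v \<in> VL \<Longrightarrow> F (vscale c v) = vscale c (F v)"
  by (simp add: linV_def)

lemma linV_zero: "linV F \<Longrightarrow> F 0 = 0"
proof -
  assume a: "linV F"
  have "F (vscale 0 0) = vscale 0 (F 0)" using a VL_zero by (simp add: linV_def)
  moreover have "vscale 0 (0::vec) = 0" "vscale 0 (F 0) = 0" by (auto simp: vscale_def fun_eq_iff)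
  ultimately show ?thesis by simp
qed

lemma linV_sum:
  assumes F: "linV F" and h: "\<And>s. s \<in> S \<Longrightarrow> h s \<in> VL"
  shows "F (sum h S) = (\<Sum>s\<in>S. F (h s))"
  using h
proof (induct S rule: infinite_finite_induct)
  case (infinite A) thus ?case using linV_zero[OF F] by (metis sum.infinite)
next
  case empty thus ?case using linV_zero[OF F] by (metis sum.empty)
next
  case (insert a A)
  have "F (sum h (insert a A)) = F (h a + sum h A)" using insert(1,2) by (metis sum.insert)
  also have "\<dots> = F (h a) + F (sum h A)"
    by (rule linV_add[OF F]) (use insert in \<open>auto intro: VL_sum\<close>)
  also have "F (sum h A) = (\<Sum>s\<in>A. F (h s))" by (rule insert.hyps(3)) (use insert.prems in auto)
  finally show ?case using insert(1,2) by (metis sum.insert)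
qed

lemma vscale_sum: "vscale c (sum h S) = (\<Sum>s\<in>S. vscale c (h s))"
  by (simp add: fun_eq_iff vscale_def sum_fun_apply sum_distrib_left)

lemma decomp: "v \<in> VL \<Longrightarrow> v = (\<Sum>b\<in>supp v. vscale (v b) (basis b))"
proof -
  assume v: "v \<in> VL"
  have "(\<Sum>b\<in>supp v. vscale (v b) (basis b)) x = v x" for x
  proof -
    have "(\<Sum>b\<in>supp v. vscale (v b) (basis b)) x = (\<Sum>b\<in>supp v. if x = b then v b else 0)"
      unfolding sum_fun_apply vscale_def basis_def by (rule sum.cong) auto
    also have "\<dots> = (if x \<in> supp v then v x else 0)"
      using v by (simp add: VL_def)
    also have "\<dots> = v x" by (auto simp: supp_def)
    finally show ?thesis .
  qed
  thus ?thesis by (simp add: fun_eq_iff)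
qed

lemma linV_eq:
  assumes "linV F" "linV G" "\<And>b. F (basis b) = G (basis b)" "v \<in> VL"
  shows "F v = G v"
proof -
  have "F v = F (\<Sum>b\<in>supp v. vscale (v b) (basis b))" using decomp[OF assms(4)] by simp
  also have "\<dots> = (\<Sum>b\<in>supp v. vscale (v b) (F (basis b)))"
    using assms by (simp add: linV_sum VL_vscale VL_basis linV_scale)
  also have "\<dots> = (\<Sum>b\<in>supp v. vscale (v b) (G (basis b)))" using assms by simp
  also have "\<dots> = G (\<Sum>b\<in>supp v. vscale (v b) (basis b))"
    using assms by (simp add: linV_sum VL_vscale VL_basis linV_scale)
  finally show ?thesis using decomp[OF assms(4)] by simp
qed


lemma heis_b_VL: "heis_b i n b \<in> VL"
  by (auto simp: heis_b_def VL_basis VL_vscale split: prod.split)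

lemma linV_heis: "linV (heis i n)"
  unfolding heis_def by (rule linV_ext[OF heis_b_VL])

lemma heisL_comb: "heisL \<beta> n v = vadd (vadd (vscale (of_int (\<beta> I1)) (heis I1 n v))
   (vscale (of_int (\<beta> I2)) (heis I2 n v))) (vscale (of_int (\<beta> I3)) (heis I3 n v))"
  by (simp add: heisL_def vadd_def vscale_def)

lemma heisL_VL: "v \<in> VL \<Longrightarrow> heisL \<beta> n v \<in> VL"
  unfolding heisL_comb
  by (intro VL_vadd VL_vscale linV_VL[OF linV_heis])

lemma linV_heisL: "linV (heisL \<beta> n)"
  unfolding linV_def
proof (intro conjI ballI allI)
  fix v assume "v \<in> VL" thus "heisL \<beta> n v \<in> VL" by (rule heisL_VL)
next
  fix u v assume uv: "u \<in> VL" "v \<in> VL"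
  have "\<And>i. heis i n (vadd u v) = vadd (heis i n u) (heis i n v)"
    using uv by (rule linV_vadd[OF linV_heis])
  thus "heisL \<beta> n (vadd u v) = vadd (heisL \<beta> n u) (heisL \<beta> n v)"
    unfolding heisL_def by (simp add: vadd_def fun_eq_iff algebra_simps)
next
  fix c v assume v: "v \<in> VL"
  have "\<And>i. heis i n (vscale c v) = vscale c (heis i n v)"
    using v by (rule linV_scale[OF linV_heis])
  thus "heisL \<beta> n (vscale c v) = vscale c (heisL \<beta> n v)"
    unfolding heisL_def by (simp add: vscale_def fun_eq_iff algebra_simps)
qed

lemma heisL_comm:
  assumes F: "linV F" and H: "\<And>i n w. w \<in> VL \<Longrightarrow> F (heis i n w) = vscale e (heis i n (F w))"
    and w: "w \<in> VL"
  shows "F (heisL \<beta> n w) = vscale e (heisL \<beta> n (F w))"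
proof -
  have hv: "\<And>i. heis i n w \<in> VL" using w linV_VL[OF linV_heis] by blast
  show ?thesis
    unfolding heisL_comb
    using F hv w
    by (simp add: linV_vadd linV_scale VL_vadd VL_vscale H)
       (simp add: vadd_def vscale_def fun_eq_iff algebra_simps)
qed

lemma heisL_neg: "heisL (\<lambda>k. - \<beta> k) n v = vscale (-1) (heisL \<beta> n v)"
  by (simp add: heisL_def vscale_def fun_eq_iff algebra_simps)

declare Sminus.simps[simp del] Tplus.simps[simp del]

lemma Sminus_0[simp]: "Sminus \<beta> 0 v = v"
  by (simp add: Sminus.simps)

lemma Tplus_0[simp]: "Tplus \<beta> 0 v = v"
  by (simp add: Tplus.simps)

lemma Sminus_pos: "k > 0 \<Longrightarrow> Sminus \<beta> k v =
   vscale (1 / of_nat k) (\<Sum>n\<in>{1..k}. heisL \<beta> (- int n) (Sminus \<beta> (k - n) v))"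
  by (subst Sminus.simps) (simp add: vscale_def fun_eq_iff sum_fun_apply)

lemma Tplus_pos: "k > 0 \<Longrightarrow> Tplus \<beta> k v =
   vscale (1 / of_nat k) (\<Sum>n\<in>{1..k}. vscale (-1) (heisL \<beta> (int n) (Tplus \<beta> (k - n) v)))"
  by (subst Tplus.simps) (simp add: vscale_def fun_eq_iff sum_fun_apply)

lemma Sminus_VL: "v \<in> VL \<Longrightarrow> Sminus \<beta> k v \<in> VL"
proof (induct k rule: less_induct)
  case (less k)
  show ?case
  proof (cases "k = 0")
    case True thus ?thesis using less by simp
  next
    case False
    have "\<And>n. n \<in> {1..k} \<Longrightarrow> heisL \<beta> (- int n) (Sminus \<beta> (k - n) v) \<in> VL"
      using less False by (intro heisL_VL) auto
    hence "vscale (1 / of_nat k) (\<Sum>n\<in>{1..k}. heisL \<beta> (- int n) (Sminus \<beta> (k - n) v)) \<in> VL"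
      by (intro VL_vscale VL_sum)
    thus ?thesis using False by (simp only: Sminus_pos)
  qed
qed

lemma Tplus_VL: "v \<in> VL \<Longrightarrow> Tplus \<beta> k v \<in> VL"
proof (induct k rule: less_induct)
  case (less k)
  show ?case
  proof (cases "k = 0")
    case True thus ?thesis using less by simp
  next
    case False
    have "\<And>n. n \<in> {1..k} \<Longrightarrow> vscale (-1) (heisL \<beta> (int n) (Tplus \<beta> (k - n) v)) \<in> VL"
      using less False by (intro VL_vscale heisL_VL) auto
    hence "vscale (1 / of_nat k) (\<Sum>n\<in>{1..k}. vscale (-1) (heisL \<beta> (int n) (Tplus \<beta> (k - n) v))) \<in> VL"
      by (rule VL_vscale[OF VL_sum])
    thus ?thesis using False by (simp only: Tplus_pos)
  qed
qed

lemma Sminus_comm: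
  assumes F: "linV F" and H: "\<And>n w. w \<in> VL \<Longrightarrow> F (heisL \<beta> n w) = heisL \<beta>' n (F w)"
    and w: "w \<in> VL"
  shows "F (Sminus \<beta> k w) = Sminus \<beta>' k (F w)"
proof (induct k rule: less_induct)
  case (less k)
  show ?case
  proof (cases "k = 0")
    case True thus ?thesis by simp
  next
    case False
    have inV: "\<And>n. n \<in> {1..k} \<Longrightarrow> heisL \<beta> (- int n) (Sminus \<beta> (k - n) w) \<in> VL"
      using w by (intro heisL_VL Sminus_VL)
    have "F (Sminus \<beta> k w) = F (vscale (1 / of_nat k) (\<Sum>n\<in>{1..k}. heisL \<beta> (- int n) (Sminus \<beta> (k - n) w)))"
      using False by (simp only: Sminus_pos)
    also have "\<dots> = vscale (1 / of_nat k) (F (\<Sum>n\<in>{1..k}. heisL \<beta> (- int n) (Sminus \<beta> (k - n) w)))"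
      by (rule linV_scale[OF F], rule VL_sum, rule inV)
    also have "F (\<Sum>n\<in>{1..k}. heisL \<beta> (- int n) (Sminus \<beta> (k - n) w)) = (\<Sum>n\<in>{1..k}. F (heisL \<beta> (- int n) (Sminus \<beta> (k - n) w)))"
      by (rule linV_sum[OF F], rule inV)
    also have "(\<Sum>n\<in>{1..k}. F (heisL \<beta> (- int n) (Sminus \<beta> (k - n) w)))
             = (\<Sum>n\<in>{1..k}. heisL \<beta>' (- int n) (Sminus \<beta>' (k - n) (F w)))"
    proof (rule sum.cong[OF refl])
      fix n assume n: "n \<in> {1..k}"
      have "F (heisL \<beta> (- int n) (Sminus \<beta> (k - n) w)) = heisL \<beta>' (- int n) (F (Sminus \<beta> (k - n) w))"
        using w by (intro H Sminus_VL)
      also have "F (Sminus \<beta> (k - n) w) = Sminus \<beta>' (k - n) (F w)"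
        using n False by (intro less) auto
      finally show "F (heisL \<beta> (- int n) (Sminus \<beta> (k - n) w)) = heisL \<beta>' (- int n) (Sminus \<beta>' (k - n) (F w))" .
    qed
    finally show ?thesis using False by (simp add: Sminus_pos)
  qed
qed

lemma Tplus_comm:
  assumes F: "linV F" and H: "\<And>n w. w \<in> VL \<Longrightarrow> F (heisL \<beta> n w) = heisL \<beta>' n (F w)"
    and w: "w \<in> VL"
  shows "F (Tplus \<beta> k w) = Tplus \<beta>' k (F w)"
proof (induct k rule: less_induct)
  case (less k)
  show ?case
  proof (cases "k = 0")
    case True thus ?thesis by simp
  next
    case False
    have inV: "\<And>n. n \<in> {1..k} \<Longrightarrow> vscale (-1) (heisL \<beta> (int n) (Tplus \<beta> (k - n) w)) \<in> VL"
      using w by (intro VL_vscale heisL_VL Tplus_VL)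
    have "F (Tplus \<beta> k w) = F (vscale (1 / of_nat k) (\<Sum>n\<in>{1..k}. vscale (-1) (heisL \<beta> (int n) (Tplus \<beta> (k - n) w))))"
      using False by (simp only: Tplus_pos)
    also have "\<dots> = vscale (1 / of_nat k) (F (\<Sum>n\<in>{1..k}. vscale (-1) (heisL \<beta> (int n) (Tplus \<beta> (k - n) w))))"
      by (rule linV_scale[OF F], rule VL_sum, rule inV)
    also have "F (\<Sum>n\<in>{1..k}. vscale (-1) (heisL \<beta> (int n) (Tplus \<beta> (k - n) w))) = (\<Sum>n\<in>{1..k}. F (vscale (-1) (heisL \<beta> (int n) (Tplus \<beta> (k - n) w))))"
      by (rule linV_sum[OF F], rule inV)
    also have "(\<Sum>n\<in>{1..k}. F (vscale (-1) (heisL \<beta> (int n) (Tplus \<beta> (k - n) w))))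
             = (\<Sum>n\<in>{1..k}. vscale (-1) (heisL \<beta>' (int n) (Tplus \<beta>' (k - n) (F w))))"
    proof (rule sum.cong[OF refl])
      fix n assume n: "n \<in> {1..k}"
      have "F (vscale (-1) (heisL \<beta> (int n) (Tplus \<beta> (k - n) w))) = vscale (-1) (heisL \<beta>' (int n) (F (Tplus \<beta> (k - n) w)))"
        using w by (simp add: H Tplus_VL heisL_VL linV_scale[OF F])
      also have "F (Tplus \<beta> (k - n) w) = Tplus \<beta>' (k - n) (F w)"
        using n False by (intro less) auto
      finally show "F (vscale (-1) (heisL \<beta> (int n) (Tplus \<beta> (k - n) w))) = vscale (-1) (heisL \<beta>' (int n) (Tplus \<beta>' (k - n) (F w)))" .
    qed
    finally show ?thesis using False by (simp add: Tplus_pos)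
  qed
qed


lemma deg_sup: "finite S \<Longrightarrow> Poly_Mapping.keys m \<subseteq> S \<Longrightarrow> deg m = (\<Sum>p\<in>S. Poly_Mapping.lookup m p)"
  unfolding deg_def
  by (rule sum.mono_neutral_left) (auto simp: in_keys_iff)

lemma deg_add_single: "deg (m + Poly_Mapping.single p 1) = deg m + 1"
proof -
  let ?S = "Poly_Mapping.keys m \<union> {p}"
  have f: "finite ?S" by simp
  have k: "Poly_Mapping.keys (m + Poly_Mapping.single p 1) \<subseteq> ?S"
    using keys_add[of m "Poly_Mapping.single p 1"] by auto
  have "deg (m + Poly_Mapping.single p 1) = (\<Sum>q\<in>?S. Poly_Mapping.lookup (m + Poly_Mapping.single p 1) q)"
    by (rule deg_sup[OF f k])
  also have "\<dots> = (\<Sum>q\<in>?S. Poly_Mapping.lookup m q + (if q = p then 1 else 0))"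
    by (rule sum.cong) (auto simp: lookup_add lookup_single when_def)
  also have "\<dots> = (\<Sum>q\<in>?S. Poly_Mapping.lookup m q) + 1"
    by (simp add: sum.distrib)
  also have "(\<Sum>q\<in>?S. Poly_Mapping.lookup m q) = deg m"
    by (rule deg_sup[symmetric]) auto
  finally show ?thesis .
qed

lemma minus_single_add: "Poly_Mapping.lookup (m::mon) p > 0 \<Longrightarrow> m = (m - Poly_Mapping.single p 1) + Poly_Mapping.single p 1"
proof (rule poly_mapping_eqI)
  fix q assume a: "Poly_Mapping.lookup m p > 0"
  show "Poly_Mapping.lookup m q = Poly_Mapping.lookup (m - Poly_Mapping.single p 1 + Poly_Mapping.single p 1) q"
  proof (cases "q = p")
    case True
    have "Poly_Mapping.lookup m p - 1 + 1 = Poly_Mapping.lookup m p" using a by linarith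
    thus ?thesis using True by (simp add: lookup_add lookup_minus)
  qed (simp add: lookup_add lookup_minus lookup_single_not_eq)
qed

lemma deg_minus_single: "Poly_Mapping.lookup m p > 0 \<Longrightarrow> deg m = deg (m - Poly_Mapping.single p 1) + 1"
  by (metis minus_single_add deg_add_single)

lemma deg_pos: "(m::mon) \<noteq> 0 \<Longrightarrow> \<exists>p. Poly_Mapping.lookup m p > 0"
proof (rule ccontr)
  assume a: "m \<noteq> 0" "\<not> (\<exists>p. Poly_Mapping.lookup m p > 0)"
  hence "m = 0" by (intro poly_mapping_eqI) auto
  thus False using a by simp
qed

lemma vop_b_sum: "vop_b \<beta> n (m, \<gamma>) = (\<Sum>k\<in>{0..wt m}. if 0 \<le> int k - n - 1 - ip \<beta> \<gamma>
    then Sminus \<beta> (nat (int k - n - 1 - ip \<beta> \<gamma>)) (Tplus \<beta> k (basis (m, latadd \<beta> \<gamma>))) else 0)"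
  unfolding vop_b_def by (auto simp: fun_eq_iff sum_fun_apply Let_def intro!: sum.cong)

lemma vop_b_VL: "vop_b \<beta> n b \<in> VL"
  by (cases b) (simp only: vop_b_sum, rule VL_sum, simp add: VL_zero Sminus_VL Tplus_VL VL_basis)

lemma linV_vop: "linV (vop \<beta> n)"
  unfolding vop_def by (rule linV_ext[OF vop_b_VL])

lemma vop_b_comm:
  assumes F: "linV F" and H: "\<And>n w. w \<in> VL \<Longrightarrow> F (heisL \<beta> n w) = heisL \<beta>' n (F w)"
  shows "F (vop_b \<beta> n (m, \<gamma>)) = (\<Sum>k\<in>{0..wt m}. if 0 \<le> int k - n - 1 - ip \<beta> \<gamma>
    then Sminus \<beta>' (nat (int k - n - 1 - ip \<beta> \<gamma>)) (Tplus \<beta>' k (F (basis (m, latadd \<beta> \<gamma>)))) else 0)"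
  unfolding vop_b_sum
  apply (subst linV_sum[OF F])
   apply (simp add: VL_zero Sminus_VL Tplus_VL VL_basis)
  apply (rule sum.cong[OF refl])
  apply (simp add: linV_zero[OF F] Sminus_comm[OF F H] Tplus_comm[OF F H] Tplus_VL VL_basis)
  done

lemma ext_fscale: "ext (\<lambda>b. vscale c (f b)) v = vscale c (ext f v)"
  by (simp add: ext_def vscale_def fun_eq_iff sum_distrib_left mult.left_commute)

definition pp :: "mon \<times> lat \<Rightarrow> vec" where
  "pp = (\<lambda>(m, \<gamma>). vscale ((-1) ^ deg m) (basis (m, (\<lambda>i. - \<gamma> i))))"

lemma psi2_ext: "psi2 = ext pp"
  by (simp add: psi2_def pp_def)

lemma pp_VL: "pp b \<in> VL"
  by (auto simp: pp_def VL_vscale VL_basis split: prod.split)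

lemma linV_psi2: "linV psi2"
  unfolding psi2_ext by (rule linV_ext[OF pp_VL])

lemma psi2_heis_b: "ext pp (heis_b i n (m, \<gamma>)) = vscale (-1) (ext (heis_b i n) (pp (m, \<gamma>)))"
proof -
  consider "n < 0" | "n = 0" | "n > 0" by linarith
  thus ?thesis
  proof cases
    case 1 thus ?thesis
      by (simp add: heis_b_def pp_def ext_basis ext_vscale_basis deg_add_single[simplified]) (simp add: vscale_def fun_eq_iff)
  next
    case 2 thus ?thesis
      by (simp add: heis_b_def pp_def ext_basis ext_vscale_basis) (simp add: vscale_def fun_eq_iff)
  next
    case 3
    let ?p = "(i, nat (n - 1))"
    show ?thesis
    proof (cases "Poly_Mapping.lookup m ?p = 0")
      case True thus ?thesis using 3
        by (simp add: heis_b_def pp_def ext_basis ext_vscale_basis) (simp add: vscale_def fun_eq_iff)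
    next
      case False
      hence d: "deg m = deg (m - Poly_Mapping.single ?p 1) + 1" by (intro deg_minus_single) simp
      show ?thesis using 3
        by (simp add: heis_b_def pp_def ext_basis ext_vscale_basis) (simp add: vscale_def fun_eq_iff d)
    qed
  qed
qed

lemma psi2_heis: "w \<in> VL \<Longrightarrow> psi2 (heis i n w) = vscale (-1) (heis i n (psi2 w))"
proof -
  assume w: "w \<in> VL"
  have "psi2 (heis i n w) = ext (\<lambda>b. ext pp (heis_b i n b)) w"
    unfolding psi2_ext heis_def by (rule ext_comp[OF w heis_b_VL])
  also have "\<dots> = ext (\<lambda>b. vscale (-1) (ext (heis_b i n) (pp b))) w"
  proof -
    have "(\<lambda>b. ext pp (heis_b i n b)) = (\<lambda>b. vscale (-1) (ext (heis_b i n) (pp b)))"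
      by (rule HOL.ext) (metis psi2_heis_b surj_pair)
    thus ?thesis by simp
  qed
  also have "\<dots> = vscale (-1) (ext (\<lambda>b. ext (heis_b i n) (pp b)) w)"
    by (rule ext_fscale)
  also have "ext (\<lambda>b. ext (heis_b i n) (pp b)) w = heis i n (psi2 w)"
    unfolding psi2_ext heis_def by (rule ext_comp[OF w pp_VL, symmetric])
  finally show ?thesis .
qed

lemma psi2_heisL: "w \<in> VL \<Longrightarrow> psi2 (heisL \<beta> n w) = heisL (\<lambda>k. - \<beta> k) n (psi2 w)"
  by (simp add: heisL_comm[OF linV_psi2 psi2_heis] heisL_neg)

definition sgnL :: "lat \<Rightarrow> complex" where
  "sgnL \<gamma> = (if even (\<gamma> I1 + \<gamma> I2 + \<gamma> I3) then 1 else -1)"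

definition gp :: "mon \<times> lat \<Rightarrow> vec" where
  "gp = (\<lambda>(m, \<gamma>). vscale (sgnL \<gamma>) (basis (m, \<gamma>)))"

definition gm :: "vec \<Rightarrow> vec" where
  "gm = ext gp"

lemma gp_VL: "gp b \<in> VL"
  by (auto simp: gp_def VL_vscale VL_basis split: prod.split)

lemma linV_gm: "linV gm"
  unfolding gm_def by (rule linV_ext[OF gp_VL])

lemma gm_heis_b: "ext gp (heis_b i n (m, \<gamma>)) = vscale 1 (ext (heis_b i n) (gp (m, \<gamma>)))"
  by (simp add: heis_b_def gp_def ext_basis ext_vscale_basis) (simp add: vscale_def fun_eq_iff)

lemma gm_heis: "w \<in> VL \<Longrightarrow> gm (heis i n w) = vscale 1 (heis i n (gm w))"
proof -
  assume w: "w \<in> VL"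
  have "gm (heis i n w) = ext (\<lambda>b. ext gp (heis_b i n b)) w"
    unfolding gm_def heis_def by (rule ext_comp[OF w heis_b_VL])
  also have "\<dots> = ext (\<lambda>b. vscale 1 (ext (heis_b i n) (gp b))) w"
  proof -
    have "(\<lambda>b. ext gp (heis_b i n b)) = (\<lambda>b. vscale 1 (ext (heis_b i n) (gp b)))"
      by (rule HOL.ext) (metis gm_heis_b surj_pair)
    thus ?thesis by simp
  qed
  also have "\<dots> = vscale 1 (ext (\<lambda>b. ext (heis_b i n) (gp b)) w)"
    by (rule ext_fscale)
  also have "ext (\<lambda>b. ext (heis_b i n) (gp b)) w = heis i n (gm w)"
    unfolding gm_def heis_def by (rule ext_comp[OF w gp_VL, symmetric])
  finally show ?thesis .
qed

lemma vscale_1: "vscale 1 v = v"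
  by (simp add: vscale_def)

lemma gm_heisL: "w \<in> VL \<Longrightarrow> gm (heisL \<beta> n w) = heisL \<beta> n (gm w)"
  using heisL_comm[OF linV_gm gm_heis] by (simp add: vscale_1)

lemma vscale_heisL: "w \<in> VL \<Longrightarrow> vscale c (heisL \<beta> n w) = heisL \<beta> n (vscale c w)"
  by (simp add: linV_scale[OF linV_heisL])


lemma ip_neg: "ip (\<lambda>k. - \<beta> k) (\<lambda>i. - \<gamma> i) = ip \<beta> \<gamma>"
  by (simp add: ip_def)

lemma latadd_neg: "latadd (\<lambda>k. - \<beta> k) (\<lambda>i. - \<gamma> i) = (\<lambda>i. - latadd \<beta> \<gamma> i)"
  by (simp add: latadd_def fun_eq_iff)

lemma vscale_ST: "u \<in> VL \<Longrightarrow> Sminus b j (Tplus b k (vscale c u)) = vscale c (Sminus b j (Tplus b k u))"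
  by (simp add: Sminus_comm[OF linV_vscale vscale_heisL] Tplus_comm[OF linV_vscale vscale_heisL] Tplus_VL)

lemma vscale_if0: "vscale c (if P then X else 0) = (if P then vscale c X else 0)"
  by (simp add: vscale_def fun_eq_iff)

lemma psi2_basis: "psi2 (basis (m, \<gamma>)) = vscale ((-1) ^ deg m) (basis (m, (\<lambda>i. - \<gamma> i)))"
  by (simp add: psi2_ext ext_basis pp_def)

lemma psi2_vop_b: "ext pp (vop_b \<beta> n (m, \<gamma>)) = ext (vop_b (\<lambda>k. - \<beta> k) n) (pp (m, \<gamma>))"
proof -
  let ?s = "(-1::complex) ^ deg m"
  have "ext pp (vop_b \<beta> n (m, \<gamma>)) = psi2 (vop_b \<beta> n (m, \<gamma>))" by (simp add: psi2_ext)
  also have "\<dots> = (\<Sum>k\<in>{0..wt m}. if 0 \<le> int k - n - 1 - ip \<beta> \<gamma>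
    then Sminus (\<lambda>k. - \<beta> k) (nat (int k - n - 1 - ip \<beta> \<gamma>)) (Tplus (\<lambda>k. - \<beta> k) k (psi2 (basis (m, latadd \<beta> \<gamma>)))) else 0)"
    by (rule vop_b_comm[OF linV_psi2 psi2_heisL])
  also have "\<dots> = vscale ?s (vop_b (\<lambda>k. - \<beta> k) n (m, (\<lambda>i. - \<gamma> i)))"
    unfolding vop_b_sum vscale_sum ip_neg latadd_neg psi2_basis vscale_if0
    by (intro sum.cong refl) (simp add: vscale_ST VL_basis)
  also have "\<dots> = ext (vop_b (\<lambda>k. - \<beta> k) n) (pp (m, \<gamma>))"
    by (simp add: pp_def ext_vscale_basis)
  finally show ?thesis .
qed

lemma psi2_vop: "w \<in> VL \<Longrightarrow> psi2 (vop \<beta> n w) = vop (\<lambda>k. - \<beta> k) n (psi2 w)"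
proof -
  assume w: "w \<in> VL"
  have "psi2 (vop \<beta> n w) = ext (\<lambda>b. ext pp (vop_b \<beta> n b)) w"
    unfolding psi2_ext vop_def by (rule ext_comp[OF w vop_b_VL])
  also have "\<dots> = ext (\<lambda>b. ext (vop_b (\<lambda>k. - \<beta> k) n) (pp b)) w"
  proof -
    have "(\<lambda>b. ext pp (vop_b \<beta> n b)) = (\<lambda>b. ext (vop_b (\<lambda>k. - \<beta> k) n) (pp b))"
      by (rule HOL.ext) (metis psi2_vop_b surj_pair)
    thus ?thesis by simp
  qed
  also have "\<dots> = vop (\<lambda>k. - \<beta> k) n (psi2 w)"
    unfolding psi2_ext vop_def by (rule ext_comp[OF w pp_VL, symmetric])
  finally show ?thesis .
qed

lemma gm_basis: "gm (basis (m, \<gamma>)) = vscale (sgnL \<gamma>) (basis (m, \<gamma>))"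
  by (simp add: gm_def ext_basis gp_def)

lemma gm_vop_b: "ext gp (vop_b \<beta> n (m, \<gamma>)) = vscale (sgnL (latadd \<beta> \<gamma>)) (vop_b \<beta> n (m, \<gamma>))"
proof -
  have "ext gp (vop_b \<beta> n (m, \<gamma>)) = gm (vop_b \<beta> n (m, \<gamma>))" by (simp add: gm_def)
  also have "\<dots> = (\<Sum>k\<in>{0..wt m}. if 0 \<le> int k - n - 1 - ip \<beta> \<gamma>
    then Sminus \<beta> (nat (int k - n - 1 - ip \<beta> \<gamma>)) (Tplus \<beta> k (gm (basis (m, latadd \<beta> \<gamma>)))) else 0)"
    by (rule vop_b_comm[OF linV_gm gm_heisL])
  also have "\<dots> = vscale (sgnL (latadd \<beta> \<gamma>)) (vop_b \<beta> n (m, \<gamma>))"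
    unfolding vop_b_sum vscale_sum gm_basis vscale_if0
    by (intro sum.cong refl) (simp add: vscale_ST VL_basis)
  finally show ?thesis .
qed

lemma vscale_vscale: "vscale a (vscale b v) = vscale (a * b) v"
  by (simp add: vscale_def fun_eq_iff)

lemma gm_vop:
  assumes w: "w \<in> VL" and sg: "\<And>\<gamma>. sgnL (latadd \<beta> \<gamma>) = - sgnL \<gamma>"
  shows "gm (vop \<beta> n w) = vscale (-1) (vop \<beta> n (gm w))"
proof -
  have "gm (vop \<beta> n w) = ext (\<lambda>b. ext gp (vop_b \<beta> n b)) w"
    unfolding gm_def vop_def by (rule ext_comp[OF w vop_b_VL])
  also have "\<dots> = ext (\<lambda>b. vscale (-1) (ext (vop_b \<beta> n) (gp b))) w"
  proof -
    have "ext gp (vop_b \<beta> n b) = vscale (-1) (ext (vop_b \<beta> n) (gp b))" for b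
    proof (cases b)
      case (Pair m \<gamma>)
      show ?thesis unfolding Pair gm_vop_b sg
        by (simp add: gp_def ext_vscale_basis vscale_vscale)
    qed
    thus ?thesis by simp
  qed
  also have "\<dots> = vscale (-1) (ext (\<lambda>b. ext (vop_b \<beta> n) (gp b)) w)"
    by (rule ext_fscale)
  also have "ext (\<lambda>b. ext (vop_b \<beta> n) (gp b)) w = vop \<beta> n (gm w)"
    unfolding gm_def vop_def by (rule ext_comp[OF w gp_VL, symmetric])
  finally show ?thesis .
qed

lemma sgnL_up: "sgnL (latadd (unitv i) \<gamma>) = - sgnL \<gamma>"
  by (cases i) (auto simp: sgnL_def latadd_def unitv_def)

lemma sgnL_down: "sgnL (latadd (\<lambda>k. - unitv i k) \<gamma>) = - sgnL \<gamma>"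
  by (cases i) (auto simp: sgnL_def latadd_def unitv_def)


lemma Nlat_even: "\<gamma> \<in> Nlat \<Longrightarrow> even (\<gamma> I1 + \<gamma> I2 + \<gamma> I3)"
proof (induct rule: Nlat.induct)
  case zero thus ?case by simp
next
  case (addp \<gamma> i j) thus ?case by (cases i; cases j) (auto simp: latadd_def unitv_def)
next
  case (subp \<gamma> i j) thus ?case by (cases i; cases j) (auto simp: latadd_def unitv_def)
next
  case (addm \<gamma> i j) thus ?case by (cases i; cases j) (auto simp: latadd_def unitv_def)
next
  case (subm \<gamma> i j) thus ?case by (cases i; cases j) (auto simp: latadd_def unitv_def)
qed

lemma Nlat_m: "\<gamma> \<in> Nlat \<Longrightarrow> latadd \<gamma> (\<lambda>k. c * (unitv i k - unitv j k)) \<in> Nlat"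
proof (induct c rule: int_induct[where k=0])
  case base
  have "latadd \<gamma> (\<lambda>k. 0 * (unitv i k - unitv j k)) = \<gamma>" by (simp add: latadd_def)
  thus ?case using base by simp
next
  case (step1 c)
  have "latadd \<gamma> (\<lambda>k. (c + 1) * (unitv i k - unitv j k)) =
        latadd (latadd \<gamma> (\<lambda>k. c * (unitv i k - unitv j k))) (\<lambda>k. unitv i k - unitv j k)"
    by (simp add: latadd_def fun_eq_iff algebra_simps)
  thus ?case using step1 Nlat.addm by metis
next
  case (step2 c)
  have "latadd \<gamma> (\<lambda>k. (c - 1) * (unitv i k - unitv j k)) =
        latadd (latadd \<gamma> (\<lambda>k. c * (unitv i k - unitv j k))) (\<lambda>k. - (unitv i k - unitv j k))"
    by (simp add: latadd_def fun_eq_iff algebra_simps)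
  thus ?case using step2 Nlat.subm by metis
qed

lemma Nlat_2: "\<gamma> \<in> Nlat \<Longrightarrow> latadd \<gamma> (\<lambda>k. c * (unitv i k + unitv i k)) \<in> Nlat"
proof (induct c rule: int_induct[where k=0])
  case base
  have "latadd \<gamma> (\<lambda>k. 0 * (unitv i k + unitv i k)) = \<gamma>" by (simp add: latadd_def)
  thus ?case using base by simp
next
  case (step1 c)
  have "latadd \<gamma> (\<lambda>k. (c + 1) * (unitv i k + unitv i k)) =
        latadd (latadd \<gamma> (\<lambda>k. c * (unitv i k + unitv i k))) (latadd (unitv i) (unitv i))"
    by (simp add: latadd_def fun_eq_iff algebra_simps)
  thus ?case using step1 Nlat.addp by metis
next
  case (step2 c)
  have "latadd \<gamma> (\<lambda>k. (c - 1) * (unitv i k + unitv i k)) =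
        latadd (latadd \<gamma> (\<lambda>k. c * (unitv i k + unitv i k))) (\<lambda>k. - (unitv i k + unitv i k))"
    by (simp add: latadd_def fun_eq_iff algebra_simps)
  thus ?case using step2 Nlat.subp by metis
qed

lemma even_Nlat:
  assumes e: "even (\<gamma> I1 + \<gamma> I2 + \<gamma> I3)"
  shows "\<gamma> \<in> Nlat"
proof -
  obtain h where h: "\<gamma> I1 + \<gamma> I2 + \<gamma> I3 = 2 * h" using e by (metis dvd_def)
  let ?g1 = "latadd (\<lambda>_. 0) (\<lambda>k. \<gamma> I1 * (unitv I1 k - unitv I3 k))"
  let ?g2 = "latadd ?g1 (\<lambda>k. \<gamma> I2 * (unitv I2 k - unitv I3 k))"
  let ?g3 = "latadd ?g2 (\<lambda>k. h * (unitv I3 k + unitv I3 k))"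
  have "?g3 \<in> Nlat" by (intro Nlat_2 Nlat_m Nlat.zero)
  moreover have "?g3 = \<gamma>"
  proof
    fix k show "?g3 k = \<gamma> k" using h by (cases k) (auto simp: latadd_def unitv_def)
  qed
  ultimately show ?thesis by simp
qed

lemma Nlat_iff: "\<gamma> \<in> Nlat \<longleftrightarrow> even (\<gamma> I1 + \<gamma> I2 + \<gamma> I3)"
  using Nlat_even even_Nlat by blast

lemma gm_apply: "v \<in> VL \<Longrightarrow> gm v x = sgnL (snd x) * v x"
proof -
  assume v: "v \<in> VL"
  have "gm v x = (\<Sum>b\<in>supp v. if b = x then v b * sgnL (snd x) else 0)"
    unfolding gm_def ext_def
    by (rule sum.cong) (auto simp: gp_def vscale_def basis_def split: prod.split)
  also have "\<dots> = (if x \<in> supp v then v x * sgnL (snd x) else 0)"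
    using v by (simp add: VL_def)
  also have "\<dots> = sgnL (snd x) * v x" by (auto simp: supp_def)
  finally show ?thesis .
qed

lemma VN_iff: "v \<in> VN \<longleftrightarrow> v \<in> VL \<and> gm v = v"
proof
  assume a: "v \<in> VN"
  hence v: "v \<in> VL" by (simp add: VN_def)
  have "gm v x = v x" for x
  proof (cases x)
    case (Pair m \<gamma>)
    show ?thesis
    proof (cases "v x = 0")
      case True thus ?thesis using v by (simp add: gm_apply)
    next
      case False
      hence "\<gamma> \<in> Nlat" using a Pair by (auto simp: VN_def)
      thus ?thesis using v Pair by (simp add: gm_apply sgnL_def Nlat_iff)
    qed
  qed
  thus "v \<in> VL \<and> gm v = v" using v by (simp add: fun_eq_iff)
next
  assume a: "v \<in> VL \<and> gm v = v"
  have "\<gamma> \<in> Nlat" if nz: "v (m, \<gamma>) \<noteq> 0" for m \<gamma>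
  proof -
    have "sgnL \<gamma> * v (m, \<gamma>) = v (m, \<gamma>)" using a gm_apply[of v "(m, \<gamma>)"] by simp
    hence "sgnL \<gamma> = 1" using nz by simp
    thus ?thesis by (simp add: sgnL_def Nlat_iff split: if_splits)
  qed
  thus "v \<in> VN" using a by (auto simp: VN_def)
qed


lemma tau_linV: "is_tau t \<Longrightarrow> linV t"
  by (auto simp: is_tau_def linV_def bij_betw_def)

lemma heis_basis_neg: "heis i (- int r - 1) (basis (m, \<gamma>)) = basis (m + Poly_Mapping.single (i, r) 1, \<gamma>)"
  by (simp add: heis_def ext_basis heis_b_def)

lemma vop_basis0: "vop \<beta> (- 1 - ip \<beta> \<gamma>) (basis (0, \<gamma>)) = basis (0, latadd \<beta> \<gamma>)"
  by (simp add: vop_def ext_basis vop_b_sum wt_def)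

lemma vadd_comm: "vadd u v = vadd v u"
  by (simp add: vadd_def fun_eq_iff add.commute)

lemma neg_neg_unitv: "(\<lambda>k. - (- unitv i k)) = unitv i"
  by simp

locale tauctx =
  fixes t :: "vec \<Rightarrow> vec"
  assumes tau: "is_tau t"
begin

lemma tl: "linV t" by (rule tau_linV[OF tau])

lemma ax_heis: "v \<in> VL \<Longrightarrow> t (heis i n v) = vadd (vop (unitv i) n (t v)) (vop (\<lambda>k. - unitv i k) n (t v))"
  using tau by (simp add: is_tau_def)

lemma ax_up: "v \<in> VL \<Longrightarrow> t (vop (unitv i) n v) = vscale (1/2) (vadd (heis i n (t v))
              (vadd (vscale (-1) (vop (unitv i) n (t v))) (vop (\<lambda>k. - unitv i k) n (t v))))"
  using tau by (simp add: is_tau_def)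

lemma ax_down: "v \<in> VL \<Longrightarrow> t (vop (\<lambda>k. - unitv i k) n v) = vscale (1/2) (vadd (heis i n (t v))
              (vadd (vop (unitv i) n (t v)) (vscale (-1) (vop (\<lambda>k. - unitv i k) n (t v)))))"
  using tau by (simp add: is_tau_def)

definition F1 where "F1 v = t (gm v)"
definition F2 where "F2 v = psi2 (t v)"

lemma linF1: "linV F1"
  unfolding F1_def[abs_def] by (rule linV_comp[OF tl linV_gm])

lemma linF2: "linV F2"
  unfolding F2_def[abs_def] by (rule linV_comp[OF linV_psi2 tl])

lemmas VLs = VL_vadd VL_vscale linV_VL[OF linV_heis] linV_VL[OF linV_vop] linV_VL[OF tl]
  linV_VL[OF linV_gm] linV_VL[OF linV_psi2] VL_basis

lemma step_heis:
  assumes u: "u \<in> VL" and IH: "F1 u = F2 u"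
  shows "F1 (heis i n u) = F2 (heis i n u)"
proof -
  have "F1 (heis i n u) = vadd (vop (unitv i) n (F1 u)) (vop (\<lambda>k. - unitv i k) n (F1 u))"
    unfolding F1_def using u by (simp add: gm_heis vscale_1 ax_heis VLs)
  moreover have "F2 (heis i n u) = vadd (vop (\<lambda>k. - unitv i k) n (F2 u)) (vop (unitv i) n (F2 u))"
    unfolding F2_def using u
    by (simp add: ax_heis linV_vadd[OF linV_psi2] psi2_vop VLs)
  ultimately show ?thesis using IH by (simp add: vadd_comm)
qed

lemma step_up:
  assumes u: "u \<in> VL" and IH: "F1 u = F2 u"
  shows "F1 (vop (unitv i) n u) = F2 (vop (unitv i) n u)"
proof -
  let ?X = "F1 u"
  have A: "F1 (vop (unitv i) n u) = vscale (-1) (vscale (1/2) (vadd (heis i n ?X)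
              (vadd (vscale (-1) (vop (unitv i) n ?X)) (vop (\<lambda>k. - unitv i k) n ?X))))"
    unfolding F1_def using u
    by (simp add: gm_vop sgnL_up linV_scale[OF tl] ax_up VLs)
  have B: "F2 (vop (unitv i) n u) = vscale (1/2) (vadd (vscale (-1) (heis i n (F2 u)))
              (vadd (vscale (-1) (vop (\<lambda>k. - unitv i k) n (F2 u))) (vop (unitv i) n (F2 u))))"
    unfolding F2_def using u
    by (simp add: ax_up linV_vadd[OF linV_psi2] linV_scale[OF linV_psi2] psi2_vop psi2_heis VLs)
  show ?thesis unfolding A B IH by (simp add: vadd_def vscale_def fun_eq_iff algebra_simps)
qed

lemma step_down:
  assumes u: "u \<in> VL" and IH: "F1 u = F2 u"
  shows "F1 (vop (\<lambda>k. - unitv i k) n u) = F2 (vop (\<lambda>k. - unitv i k) n u)"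
proof -
  let ?X = "F1 u"
  have A: "F1 (vop (\<lambda>k. - unitv i k) n u) = vscale (-1) (vscale (1/2) (vadd (heis i n ?X)
              (vadd (vop (unitv i) n ?X) (vscale (-1) (vop (\<lambda>k. - unitv i k) n ?X)))))"
    unfolding F1_def using u
    by (simp add: gm_vop sgnL_down linV_scale[OF tl] ax_down VLs)
  have B: "F2 (vop (\<lambda>k. - unitv i k) n u) = vscale (1/2) (vadd (vscale (-1) (heis i n (F2 u)))
              (vadd (vop (\<lambda>k. - unitv i k) n (F2 u)) (vscale (-1) (vop (unitv i) n (F2 u)))))"
    unfolding F2_def using u
    by (simp add: ax_down linV_vadd[OF linV_psi2] linV_scale[OF linV_psi2] psi2_vop psi2_heis VLs)
  show ?thesis unfolding A B IH by (simp add: vadd_def vscale_def fun_eq_iff algebra_simps)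
qed

lemma t_vac: "t vacuum = vacuum"
  using tau by (simp add: is_tau_def)

lemma deg0: "deg 0 = 0" by (simp add: deg_def)

lemma base: "F1 vacuum = F2 vacuum"
proof -
  have "F1 vacuum = t (vscale (sgnL (\<lambda>_. 0)) vacuum)"
    unfolding F1_def vacuum_def by (simp add: gm_basis)
  also have "\<dots> = vacuum" by (simp add: sgnL_def vscale_1 t_vac)
  also have "\<dots> = F2 vacuum"
    unfolding F2_def t_vac unfolding vacuum_def by (simp add: psi2_basis deg0 vscale_1)
  finally show ?thesis .
qed

lemma lat_ind: "F1 (basis (0, \<gamma>)) = F2 (basis (0, \<gamma>))"
proof (induct "nat \<bar>\<gamma> I1\<bar> + nat \<bar>\<gamma> I2\<bar> + nat \<bar>\<gamma> I3\<bar>" arbitrary: \<gamma> rule: less_induct)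
  case less
  show ?case
  proof (cases "\<exists>i. \<gamma> i \<noteq> 0")
    case False
    hence "\<gamma> = (\<lambda>_. 0)" by auto
    thus ?thesis using base by (simp add: vacuum_def)
  next
    case True
    then obtain i where i: "\<gamma> i \<noteq> 0" by blast
    show ?thesis
    proof (cases "\<gamma> i > 0")
      case True
      let ?g = "latadd (\<lambda>k. - unitv i k) \<gamma>"
      have eq: "latadd (unitv i) ?g = \<gamma>" by (simp add: latadd_def fun_eq_iff)
      have lt: "nat \<bar>?g I1\<bar> + nat \<bar>?g I2\<bar> + nat \<bar>?g I3\<bar> < nat \<bar>\<gamma> I1\<bar> + nat \<bar>\<gamma> I2\<bar> + nat \<bar>\<gamma> I3\<bar>"
        using True by (cases i) (auto simp: latadd_def unitv_def)
      have "F1 (vop (unitv i) (- 1 - ip (unitv i) ?g) (basis (0, ?g))) = F2 (vop (unitv i) (- 1 - ip (unitv i) ?g) (basis (0, ?g)))"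
        by (rule step_up[OF VL_basis less(1)[OF lt]])
      thus ?thesis unfolding vop_basis0 eq .
    next
      case False
      hence neg: "\<gamma> i < 0" using i by simp
      let ?g = "latadd (unitv i) \<gamma>"
      have eq: "latadd (\<lambda>k. - unitv i k) ?g = \<gamma>" by (simp add: latadd_def fun_eq_iff)
      have lt: "nat \<bar>?g I1\<bar> + nat \<bar>?g I2\<bar> + nat \<bar>?g I3\<bar> < nat \<bar>\<gamma> I1\<bar> + nat \<bar>\<gamma> I2\<bar> + nat \<bar>\<gamma> I3\<bar>"
        using neg by (cases i) (auto simp: latadd_def unitv_def)
      have "F1 (vop (\<lambda>k. - unitv i k) (- 1 - ip (\<lambda>k. - unitv i k) ?g) (basis (0, ?g))) = F2 (vop (\<lambda>k. - unitv i k) (- 1 - ip (\<lambda>k. - unitv i k) ?g) (basis (0, ?g)))"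
        by (rule step_down[OF VL_basis less(1)[OF lt]])
      thus ?thesis unfolding vop_basis0 eq .
    qed
  qed
qed

lemma mon_ind: "F1 (basis (m, \<gamma>)) = F2 (basis (m, \<gamma>))"
proof (induct "deg m" arbitrary: m rule: less_induct)
  case less
  show ?case
  proof (cases "m = 0")
    case True thus ?thesis using lat_ind by simp
  next
    case False
    then obtain p where p: "Poly_Mapping.lookup m p > 0" using deg_pos by blast
    obtain i r where ir: "p = (i, r)" by (cases p)
    let ?m = "m - Poly_Mapping.single p 1"
    have d: "deg ?m < deg m" using deg_minus_single[OF p] by simp
    have meq: "?m + Poly_Mapping.single (i, r) 1 = m" using minus_single_add[OF p] ir by simp
    have "F1 (heis i (- int r - 1) (basis (?m, \<gamma>))) = F2 (heis i (- int r - 1) (basis (?m, \<gamma>)))"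
      by (rule step_heis[OF VL_basis less(1)[OF d]])
    thus ?thesis unfolding heis_basis_neg meq .
  qed
qed

lemma all_eq: "v \<in> VL \<Longrightarrow> F1 v = F2 v"
  by (rule linV_eq[OF linF1 linF2]) (auto simp: mon_ind)

end

theorem lemma3p2:
  fixes \<tau> :: "vec \<Rightarrow> vec"
  assumes "is_tau \<tau>"
  shows "\<tau> ` VN = VLplus"
proof -
  interpret tauctx \<tau> by (rule tauctx.intro[OF assms])
  have bij: "bij_betw \<tau> VL VL" using assms by (simp add: is_tau_def)
  show ?thesis
  proof
    show "\<tau> ` VN \<subseteq> VLplus"
    proof
      fix w assume "w \<in> \<tau> ` VN"
      then obtain v where v: "v \<in> VN" "w = \<tau> v" by blast
      have vl: "v \<in> VL" "gm v = v" using v VN_iff by auto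
      have "psi2 (\<tau> v) = \<tau> (gm v)" using all_eq[OF vl(1)] by (simp add: F1_def F2_def)
      hence "psi2 (\<tau> v) = \<tau> v" using vl by simp
      moreover have "\<tau> v \<in> VL" using bij vl by (auto simp: bij_betw_def)
      ultimately show "w \<in> VLplus" using v by (simp add: VLplus_def)
    qed
  next
    show "VLplus \<subseteq> \<tau> ` VN"
    proof
      fix w assume w: "w \<in> VLplus"
      hence "w \<in> \<tau> ` VL" using bij by (simp add: VLplus_def bij_betw_def)
      then obtain v where v: "v \<in> VL" "w = \<tau> v" by blast
      have "\<tau> (gm v) = psi2 (\<tau> v)" using all_eq[OF v(1)] by (simp add: F1_def F2_def)
      also have "\<dots> = \<tau> v" using w v by (simp add: VLplus_def)
      finally have "\<tau> (gm v) = \<tau> v" .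
      moreover have "gm v \<in> VL" using v linV_VL[OF linV_gm] by blast
      ultimately have "gm v = v" using bij v by (auto simp: bij_betw_def inj_on_def)
      hence "v \<in> VN" using v VN_iff by auto
      thus "w \<in> \<tau> ` VN" using v by blast
    qed
  qed
qed

end
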